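(* Let $n=2^\alpha\prod_{i=1}^{k}p_i^{t_i}$, where $\alpha\ge 0$ is an integer, $k\ge 1$, $p_1,\dots,p_k$ are distinct odd primes and $t_1,\dots,t_k\ge 1$ are integers. Then the lattice $\widetilde\Pi(D_n)$ contains a sublattice isomorphic to the pentagon lattice $N_5$ if and only if either $\alpha\ge 2$, or $\alpha=1$ and $k\ge 2$.
   Context: For a positive integer $n$, $D_n=\langle r,s\mid r^n=e,\ s^2=e,\ srs^{-1}=r^{-1}\rangle$ is the dihedral group of order $2n$. For a finite group $G$ and a subgroup $H\le G$, let $\pi_e(H)=\{o(x)\mid x\in H\}$. Let $\mathcal{L}(G)$ be the set of subgroups of $G$; define $H_1\equiv H_2$ iff $\pi_e(H_1)=\pi_e(H_2)$, with class $[H]$. The poset $\widetilde\Pi(G)$ is $\mathcal{L}(G)/\!\equiv$ ordered by $[H_1]\lesssim[H_2]$ iff $\pi_e(H_1)\subseteq\pi_e(H_2)$; for $G=D_n$ it is a lattice. $N_5$ is the five-element lattice $\{0,a,b,c,1\}$ with $0<a<b<1$, $0<c<1$, and $c$ incomparable to $a$ and $b$. *)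

theory Defs
  imports "HOL-Algebra.Multiplicative_Group" "HOL-Computational_Algebra.Primes"
begin

text \<open>Concrete model of the dihedral group D_n of order 2n:
  the pair (i, b) with i < n stands for r^i s^b (b = True means one factor s).
  (r^i s^b)(r^j s^c) = r^(i + (if b then -j else j)) s^(b xor c).\<close>

definition dihedral :: "nat \<Rightarrow> (nat \<times> bool) monoid" where
  "dihedral n = \<lparr> partial_object.carrier = {0..<n} \<times> UNIV,
     monoid.mult = (\<lambda>(i, b) (j, c). ((i + (if b then n - j else j)) mod n, b \<noteq> c)),
     monoid.one = (0, False) \<rparr>"

definition spec :: "('a, 'b) monoid_scheme \<Rightarrow> 'a set \<Rightarrow> nat set" where
  "spec G H = group.ord G ` H"

text \<open>The poset of equivalence classes of subgroups, represented by the set of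
  spectra, ordered by inclusion.\<close>
definition spectra :: "('a, 'b) monoid_scheme \<Rightarrow> nat set set" where
  "spectra G = {spec G H | H. subgroup H G}"

definition is_lub_in :: "'a set set \<Rightarrow> 'a set \<Rightarrow> 'a set \<Rightarrow> 'a set \<Rightarrow> bool" where
  "is_lub_in S x y u \<longleftrightarrow> u \<in> S \<and> x \<subseteq> u \<and> y \<subseteq> u \<and> (\<forall>w\<in>S. x \<subseteq> w \<and> y \<subseteq> w \<longrightarrow> u \<subseteq> w)"

definition is_glb_in :: "'a set set \<Rightarrow> 'a set \<Rightarrow> 'a set \<Rightarrow> 'a set \<Rightarrow> bool" where
  "is_glb_in S x y l \<longleftrightarrow> l \<in> S \<and> l \<subseteq> x \<and> l \<subseteq> y \<and> (\<forall>w\<in>S. w \<subseteq> x \<and> w \<subseteq> y \<longrightarrow> w \<subseteq> l)"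

datatype n5 = N0 | Na | Nb | Nc | N1

fun n5_le :: "n5 \<Rightarrow> n5 \<Rightarrow> bool" where
  "n5_le N0 _ = True"
| "n5_le _ N1 = True"
| "n5_le Na Na = True"
| "n5_le Na Nb = True"
| "n5_le Nb Nb = True"
| "n5_le Nc Nc = True"
| "n5_le _ _ = False"

definition n5_sup :: "n5 \<Rightarrow> n5 \<Rightarrow> n5" where
  "n5_sup x y = (if n5_le x y then y else if n5_le y x then x else N1)"

definition n5_inf :: "n5 \<Rightarrow> n5 \<Rightarrow> n5" where
  "n5_inf x y = (if n5_le x y then x else if n5_le y x then y else N0)"

definition has_N5_sublattice :: "'a set set \<Rightarrow> bool" where
  "has_N5_sublattice S \<longleftrightarrow> (\<exists>f. inj f \<and> (\<forall>x. f x \<in> S) \<and>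
     (\<forall>x y. is_lub_in S (f x) (f y) (f (n5_sup x y)) \<and> is_glb_in S (f x) (f y) (f (n5_inf x y))))"

end

theory Submission
  imports Defs
begin



lemma int_sub_mod: "j \<le> n \<Longrightarrow> int ((a + (n - j)) mod n) = (int a - int j) mod int n"
proof -
  assume "j \<le> n"
  then have "int ((a + (n - j)) mod n) = (int a + int n - int j) mod int n"
    by (simp add: zmod_int of_nat_diff)
  also have "\<dots> = (int a - int j) mod int n"
    by (metis add.commute add_diff_eq mod_add_self1)
  finally show ?thesis .
qed

lemma F_int: fixes n i j :: nat assumes "j \<le> n"
  shows "int ((i + (if b then n - j else j)) mod n) = (int i + (if b then - int j else int j)) mod int n"
  using int_sub_mod[OF assms, of i] by (simp add: zmod_int)

lemma dassoc:
  fixes i j k n :: nat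
  assumes "i < n" "j < n" "k < n"
  shows "((i + (if b then n - ((j + (if c then n - k else k)) mod n) else (j + (if c then n - k else k)) mod n)) mod n)
       = (((i + (if b then n - j else j)) mod n + (if b \<noteq> c then n - k else k)) mod n)"
proof -
  have n: "n > 0" using assms by auto
  have le: "x mod n \<le> n" for x using n by (meson less_imp_le_nat mod_less_divisor)
  have "int ((i + (if b then n - ((j + (if c then n - k else k)) mod n) else (j + (if c then n - k else k)) mod n)) mod n)
     = (int i + (if b then - ((int j + (if c then - int k else int k)) mod int n) else (int j + (if c then - int k else int k)) mod int n)) mod int n"
    using F_int[OF le, of i b "j + (if c then n - k else k)"] F_int[of k n j c] assms by simp
  also have "\<dots> = (int i + (if b then - (int j + (if c then - int k else int k)) else (int j + (if c then - int k else int k)))) mod int n"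
    by (cases b; cases c; simp add: mod_diff_right_eq mod_add_right_eq; simp add: algebra_simps)
  also have "\<dots> = ((int i + (if b then - int j else int j)) mod int n + (if b \<noteq> c then - int k else int k)) mod int n"
    by (cases b; cases c; simp add: mod_diff_left_eq mod_add_right_eq mod_add_left_eq; simp add: algebra_simps)
  also have "\<dots> = int (((i + (if b then n - j else j)) mod n + (if b \<noteq> c then n - k else k)) mod n)"
    using F_int[of k n "(i + (if b then n - j else j)) mod n" "b \<noteq> c"] F_int[of j n i b] assms by simp
  finally show ?thesis by simp
qed

lemma dmult: "(i, b) \<otimes>\<^bsub>dihedral n\<^esub> (j, c) = ((i + (if b then n - j else j)) mod n, b \<noteq> c)"
  by (simp add: dihedral_def)
lemma dcarrier: "carrier (dihedral n) = {0..<n} \<times> UNIV"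
  by (simp add: dihedral_def)
lemma done_: "\<one>\<^bsub>dihedral n\<^esub> = (0, False)"
  by (simp add: dihedral_def)

lemma dgroup: assumes "n > 0" shows "group (dihedral n)"
proof (rule groupI)
  fix x y assume "x \<in> carrier (dihedral n)" "y \<in> carrier (dihedral n)"
  then show "x \<otimes>\<^bsub>dihedral n\<^esub> y \<in> carrier (dihedral n)"
    using assms by (cases x; cases y) (simp add: dmult dcarrier)
next
  show "\<one>\<^bsub>dihedral n\<^esub> \<in> carrier (dihedral n)" using assms by (simp add: done_ dcarrier)
next
  fix x y z assume "x \<in> carrier (dihedral n)" "y \<in> carrier (dihedral n)" "z \<in> carrier (dihedral n)"
  then show "x \<otimes>\<^bsub>dihedral n\<^esub> y \<otimes>\<^bsub>dihedral n\<^esub> z = x \<otimes>\<^bsub>dihedral n\<^esub> (y \<otimes>\<^bsub>dihedral n\<^esub> z)"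
    using dassoc by (cases x; cases y; cases z) (auto simp add: dmult dcarrier)
next
  fix x assume "x \<in> carrier (dihedral n)"
  then show "\<one>\<^bsub>dihedral n\<^esub> \<otimes>\<^bsub>dihedral n\<^esub> x = x"
    by (cases x) (simp add: dmult dcarrier done_)
next
  fix x assume x: "x \<in> carrier (dihedral n)"
  obtain i b where xi: "x = (i, b)" by (cases x)
  show "\<exists>y\<in>carrier (dihedral n). y \<otimes>\<^bsub>dihedral n\<^esub> x = \<one>\<^bsub>dihedral n\<^esub>"
  proof (cases b)
    case True
    then show ?thesis using x xi by (intro bexI[of _ "(i, True)"]) (auto simp add: dmult dcarrier done_)
  next
    case False
    then show ?thesis using x xi assms by (intro bexI[of _ "((n - i) mod n, False)"]) (auto simp add: dmult dcarrier done_ mod_add_left_eq)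
  qed
qed




lemma dpow_rot: assumes "n > 0" "i < n"
  shows "(i, False) [^]\<^bsub>dihedral n\<^esub> (k::nat) = ((k * i) mod n, False)"
proof (induction k)
  case 0 then show ?case by (simp add: done_)
next
  case (Suc k) then show ?case by (simp add: dmult mod_add_right_eq add.commute)
qed

lemma dvd_mult_iff_div_gcd: fixes n i k :: nat assumes "n > 0"
  shows "n dvd k * i \<longleftrightarrow> (n div gcd n i) dvd k"
proof -
  define g where "g = gcd n i"
  have g0: "g > 0" using assms by (simp add: g_def)
  define a where "a = n div g"
  define b where "b = i div g"
  have na: "n = g * a" by (simp add: a_def g_def)
  have ib: "i = g * b" by (simp add: b_def g_def)
  have cop: "coprime a b" unfolding a_def b_def g_def using assms by (intro div_gcd_coprime) simp
  have "n dvd k * i \<longleftrightarrow> g * a dvd g * (k * b)" using na ib by (simp add: ac_simps)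
  also have "\<dots> \<longleftrightarrow> a dvd k * b" using g0 by simp
  also have "\<dots> \<longleftrightarrow> a dvd k" using cop by (simp add: coprime_dvd_mult_left_iff)
  finally show ?thesis by (simp add: a_def g_def)
qed

lemma ord_rot: assumes "n > 0" "i < n"
  shows "group.ord (dihedral n) (i, False) = n div gcd n i"
proof -
  interpret G: group "dihedral n" using dgroup assms by simp
  have c: "(i, False) \<in> carrier (dihedral n)" using assms by (simp add: dcarrier)
  have "\<forall>k. G.ord (i, False) dvd k \<longleftrightarrow> (n div gcd n i) dvd k"
  proof
    fix k
    have "G.ord (i, False) dvd k \<longleftrightarrow> (i, False) [^]\<^bsub>dihedral n\<^esub> k = \<one>\<^bsub>dihedral n\<^esub>"
      using G.pow_eq_id[OF c] by simp
    also have "\<dots> \<longleftrightarrow> n dvd k * i" using assms by (simp add: dpow_rot done_ mod_eq_0_iff_dvd)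
    finally show "G.ord (i, False) dvd k \<longleftrightarrow> (n div gcd n i) dvd k" using dvd_mult_iff_div_gcd assms by simp
  qed
  then show ?thesis by (meson dvd_antisym dvd_refl)
qed

lemma ord_refl: assumes "n > 0" "i < n"
  shows "group.ord (dihedral n) (i, True) = 2"
proof -
  interpret G: group "dihedral n" using dgroup assms by simp
  have c: "(i, True) \<in> carrier (dihedral n)" using assms by (simp add: dcarrier)
  have "(i, True) [^]\<^bsub>dihedral n\<^esub> (2::nat) = \<one>\<^bsub>dihedral n\<^esub>"
    using assms by (simp add: numeral_2_eq_2 dmult done_)
  then have a: "G.ord (i, True) dvd 2" using G.pow_eq_id[OF c] by simp
  have "(i, True) [^]\<^bsub>dihedral n\<^esub> (1::nat) \<noteq> \<one>\<^bsub>dihedral n\<^esub>"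
    using assms by (simp add: done_ dmult)
  then have b: "\<not> G.ord (i, True) dvd 1" using G.pow_eq_id[OF c, of 1] by blast
  have "G.ord (i, True) \<le> 2" using a by (simp add: dvd_imp_le)
  then show ?thesis using a b
    by (metis One_nat_def dvd_0_left le_Suc_eq le_zero_eq numeral_2_eq_2 one_dvd zero_neq_numeral)
qed



lemma dinv_rot: assumes "n > 0" "i < n"
  shows "inv\<^bsub>dihedral n\<^esub> (i, False) = ((n - i) mod n, False)"
proof -
  interpret G: group "dihedral n" using dgroup assms by simp
  show ?thesis using assms
    by (intro G.inv_equality) (auto simp: dmult done_ dcarrier mod_add_left_eq)
qed

lemma dinv_refl: assumes "n > 0" "i < n"
  shows "inv\<^bsub>dihedral n\<^esub> (i, True) = (i, True)"
proof -
  interpret G: group "dihedral n" using dgroup assms by simp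
  show ?thesis using assms
    by (intro G.inv_equality) (auto simp: dmult done_ dcarrier)
qed

lemma rot_orders: fixes n g :: nat assumes "n > 0" "g dvd n"
  shows "(\<lambda>i. n div gcd n i) ` {i. i < n \<and> g dvd i} = {d. d dvd (n div g)}"
proof -
  define m where "m = n div g"
  have g0: "g > 0" using assms by (auto intro: Nat.gr0I)
  have nm: "n = g * m" using assms by (simp add: m_def)
  have m0: "m > 0" using nm assms by auto
  show ?thesis
  proof (intro equalityI subsetI)
    fix d assume "d \<in> (\<lambda>i. n div gcd n i) ` {i. i < n \<and> g dvd i}"
    then obtain i where i: "i < n" "g dvd i" "d = n div gcd n i" by auto
    obtain c where c: "i = g * c" using i by (auto elim: dvdE)
    have "gcd n i = g * gcd m c" using nm c by (simp add: gcd_mult_distrib_nat)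
    then have "d = m div gcd m c" using i nm g0 by simp
    then have "d dvd m" by (metis dvd_div_mult_self dvd_triv_left gcd_dvd1)
    then show "d \<in> {d. d dvd (n div g)}" by (simp add: m_def)
  next
    fix d assume "d \<in> {d. d dvd (n div g)}"
    then have d: "d dvd m" by (simp add: m_def)
    show "d \<in> (\<lambda>i. n div gcd n i) ` {i. i < n \<and> g dvd i}"
    proof (cases "d = 1")
      case True
      then show ?thesis using assms by (intro image_eqI[of _ _ 0]) auto
    next
      case False
      have d0: "d > 0" using d m0 by (auto intro: Nat.gr0I)
      then have d1: "d > 1" using False by simp
      define c where "c = m div d"
      have cm: "c dvd m" using d by (simp add: c_def div_dvd_div[of d m m] ) (metis dvd_div_mult_self dvd_triv_left)
      have clt: "c < m" using d1 m0 by (simp add: c_def)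
      have "gcd m c = c" using cm by (simp add: gcd_nat.absorb2)
      moreover have c0: "c > 0" using cm m0 by (auto intro: Nat.gr0I)
      moreover have "m div c = d" using d d0 m0 by (auto simp: c_def elim!: dvdE)
      ultimately have "n div gcd n (g * c) = d" using nm g0 by (simp add: gcd_mult_distrib_nat[symmetric])
      moreover have "g * c < n" using nm clt g0 by simp
      ultimately show ?thesis by (intro image_eqI[of _ _ "g * c"]) auto
    qed
  qed
qed




definition Dv :: "nat \<Rightarrow> nat set" where "Dv m = {d. d dvd m}"

definition Sset :: "nat \<Rightarrow> nat set set" where
  "Sset n = {X. \<exists>m F. m dvd n \<and> F \<subseteq> {2} \<and> X = Dv m \<union> F}"

lemma spec_exists: assumes n: "n > 0" and m: "m dvd n" and F: "F \<subseteq> {2}"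
  shows "Dv m \<union> F \<in> spectra (dihedral n)"
proof -
  interpret G: group "dihedral n" using dgroup n by simp
  define g where "g = n div m"
  have gn: "g dvd n" using m by (simp add: g_def div_dvd_div[of m n n] ) (metis dvd_div_mult_self dvd_triv_left)
  have m0: "m > 0" using m n by (auto intro: Nat.gr0I)
  have ng: "n div g = m" using m m0 n by (auto simp: g_def elim!: dvdE)
  define H where "H = {(i, b). i < n \<and> g dvd i \<and> (b \<longrightarrow> F \<noteq> {})}"
  have sub: "subgroup H (dihedral n)"
  proof (rule G.subgroupI)
    show "H \<subseteq> carrier (dihedral n)" by (auto simp: H_def dcarrier)
    show "H \<noteq> {}" using n by (auto simp: H_def intro!: exI[of _ 0])
  next
    fix a assume a: "a \<in> H"
    obtain i b where ab: "a = (i, b)" by (cases a)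
    show "inv\<^bsub>dihedral n\<^esub> a \<in> H"
    proof (cases b)
      case True then show ?thesis using a ab n by (simp add: dinv_refl H_def)
    next
      case False
      have "g dvd (n - i) mod n" using a ab gn by (simp add: H_def dvd_diff_nat dvd_mod)
      then show ?thesis using a ab n False by (simp add: dinv_rot H_def)
    qed
  next
    fix a b assume a: "a \<in> H" and b: "b \<in> H"
    obtain i x where ab: "a = (i, x)" by (cases a)
    obtain j y where bb: "b = (j, y)" by (cases b)
    have "g dvd (i + (if x then n - j else j)) mod n"
      using a b ab bb gn by (auto simp: H_def dvd_diff_nat dvd_mod)
    then show "a \<otimes>\<^bsub>dihedral n\<^esub> b \<in> H" using a b ab bb n by (auto simp: H_def dmult)
  qed
  have "spec (dihedral n) H = Dv m \<union> F"
  proof -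
    have H: "H = (\<lambda>i. (i, False)) ` {i. i < n \<and> g dvd i} \<union> (if F = {} then {} else (\<lambda>i. (i, True)) ` {i. i < n \<and> g dvd i})"
      by (auto simp: H_def)
    have r: "G.ord ` ((\<lambda>i. (i, False)) ` {i. i < n \<and> g dvd i}) = (\<lambda>i. n div gcd n i) ` {i. i < n \<and> g dvd i}"
      unfolding image_image using n by (intro image_cong) (auto simp: ord_rot)
    have t: "G.ord ` ((\<lambda>i. (i, True)) ` {i. i < n \<and> g dvd i}) = {2}"
    proof -
      have "G.ord ` ((\<lambda>i. (i, True)) ` {i. i < n \<and> g dvd i}) = (\<lambda>i. 2) ` {i. i < n \<and> g dvd i}"
        unfolding image_image using n by (intro image_cong) (auto simp: ord_refl)
      moreover have "{i. i < n \<and> g dvd i} \<noteq> {}" using n by auto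
      ultimately show ?thesis by auto
    qed
    have "F = {} \<or> F = {2}" using F by auto
    then show ?thesis unfolding spec_def H image_Un r
      using rot_orders[OF n gn] ng t by (auto simp: Dv_def)
  qed
  then show ?thesis using sub unfolding spectra_def by blast
qed




lemma spec_classify: assumes n: "n > 0" and H: "subgroup H (dihedral n)"
  shows "spec (dihedral n) H \<in> Sset n"
proof -
  interpret G: group "dihedral n" using dgroup n by simp
  define R where "R = {i. (i, False) \<in> H}"
  have Rlt: "i \<in> R \<Longrightarrow> i < n" for i
    using subgroup.subset[OF H] by (auto simp: R_def dcarrier)
  have R0: "0 \<in> R" using subgroup.one_closed[OF H] by (simp add: R_def done_)
  have Radd: "(i + j) mod n \<in> R" if "i \<in> R" "j \<in> R" for i j
    using subgroup.m_closed[OF H, of "(i, False)" "(j, False)"] that by (simp add: R_def dmult)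
  have Rneg: "(n - i) mod n \<in> R" if "i \<in> R" for i
    using subgroup.m_inv_closed[OF H, of "(i, False)"] that Rlt[OF that] n by (simp add: R_def dinv_rot)
  have Rmul: "(c * i) mod n \<in> R" if "i \<in> R" for i c
  proof (induction c)
    case 0 then show ?case using R0 by simp
  next
    case (Suc c)
    then have "((c * i) mod n + i) mod n \<in> R" using Radd that by blast
    then show ?case by (simp add: mod_add_right_eq add.commute)
  qed
  define P where "P = (\<lambda>g. 0 < g \<and> (g = n \<or> g \<in> R))"
  define g where "g = (LEAST g. P g)"
  have Pn: "P n" using n by (simp add: P_def)
  have Pg: "P g" unfolding g_def by (rule LeastI[of P n, OF Pn])
  have gle: "g \<le> n" unfolding g_def by (rule Least_le[of P, OF Pn])
  have least: "\<not> P r" if "r < g" for r using that unfolding g_def by (rule not_less_Least)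
  have g0: "g > 0" using Pg by (simp add: P_def)
  have rem: "i mod g \<in> R" if "i \<in> R" for i
  proof (cases "g = n")
    case True then show ?thesis using that Rlt[OF that] by simp
  next
    case False
    then have gR: "g \<in> R" using Pg by (simp add: P_def)
    define q where "q = i div g"
    have qg: "q * g \<le> i" by (simp add: q_def)
    have qgR: "q * g \<in> R" using Rmul[OF gR, of q] qg Rlt[OF that] by simp
    have "(i + (n - q * g) mod n) mod n \<in> R" using Radd[OF that Rneg[OF qgR]] .
    moreover have "(i + (n - q * g) mod n) mod n = i mod g"
    proof -
      have "(i + (n - q * g) mod n) mod n = (i + (n - q * g)) mod n" by (simp add: mod_add_right_eq)
      also have "i + (n - q * g) = (i - q * g) + n" using qg Rlt[OF that] by simp
      also have "i - q * g = i mod g" by (simp add: q_def minus_div_mult_eq_mod)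
      also have "(i mod g + n) mod n = i mod g" using gle g0
        by (metis mod_add_self2 mod_less mod_less_divisor order_less_le_trans)
      finally show ?thesis .
    qed
    ultimately show ?thesis by simp
  qed
  have Rdvd: "g dvd i" if "i \<in> R" for i
  proof (rule ccontr)
    assume "\<not> g dvd i"
    then have "0 < i mod g" by (simp add: mod_greater_zero_iff_not_dvd)
    moreover have "i mod g < g" using g0 by simp
    ultimately show False using least[of "i mod g"] rem[OF that] by (simp add: P_def)
  qed
  have gn: "g dvd n"
  proof (cases "g = n")
    case False
    then have gR: "g \<in> R" using Pg by (simp add: P_def)
    define q where "q = n div g"
    have qg: "q * g \<le> n" by (simp add: q_def)
    show ?thesis
    proof (rule ccontr)
      assume nd: "\<not> g dvd n"
      then have "q * g < n" using qg by (metis dvd_triv_right le_neq_implies_less q_def div_mult_self1_is_m g0 dvd_div_mult_self)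
      then have qgR: "q * g \<in> R" using Rmul[OF gR, of q] by simp
      have "(n - q * g) mod n \<in> R" using Rneg[OF qgR] .
      moreover have "n - q * g = n mod g" by (simp add: q_def minus_div_mult_eq_mod[symmetric])
      moreover have "n mod g < n" using gle g0 by (metis mod_less_divisor order_less_le_trans)
      ultimately have "n mod g \<in> R" by simp
      then show False using Rdvd nd dvd_mod_iff[OF dvd_refl[of g], of n] by blast
    qed
  qed simp
  have Req: "R = {i. i < n \<and> g dvd i}"
  proof (intro equalityI subsetI)
    fix i assume "i \<in> R" then show "i \<in> {i. i < n \<and> g dvd i}" using Rlt Rdvd by auto
  next
    fix i assume i: "i \<in> {i. i < n \<and> g dvd i}"
    then obtain c where c: "i = c * g" by (metis dvd_div_mult_self mem_Collect_eq)
    show "i \<in> R"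
    proof (cases "g = n")
      case True then have "i = 0" using i c by (cases c) auto
      then show ?thesis using R0 by simp
    next
      case False
      then have gR: "g \<in> R" using Pg by (simp add: P_def)
      show ?thesis using Rmul[OF gR, of c] c i by simp
    qed
  qed
  define T where "T = {i. (i, True) \<in> H}"
  have Tlt: "i \<in> T \<Longrightarrow> i < n" for i
    using subgroup.subset[OF H] by (auto simp: T_def dcarrier)
  have Hsplit: "H = (\<lambda>i. (i, False)) ` R \<union> (\<lambda>i. (i, True)) ` T"
  proof (intro equalityI subsetI)
    fix x assume x: "x \<in> H"
    obtain i b where xi: "x = (i, b)" by (cases x)
    show "x \<in> (\<lambda>i. (i, False)) ` R \<union> (\<lambda>i. (i, True)) ` T"
      using x xi by (cases b) (auto simp: R_def T_def)
  qed (auto simp: R_def T_def)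
  have r: "G.ord ` ((\<lambda>i. (i, False)) ` R) = (\<lambda>i. n div gcd n i) ` {i. i < n \<and> g dvd i}"
    unfolding image_image Req[symmetric] using n Rlt by (intro image_cong) (auto simp: ord_rot)
  have t: "G.ord ` ((\<lambda>i. (i, True)) ` T) = (if T = {} then {} else {2})"
    unfolding image_image using n Tlt by (auto simp: ord_refl)
  have "spec (dihedral n) H = Dv (n div g) \<union> (if T = {} then {} else {2})"
    unfolding spec_def Hsplit image_Un r t rot_orders[OF n gn] by (simp add: Dv_def)
  moreover have "n div g dvd n" using gn by (metis dvd_div_mult_self dvd_triv_left)
  ultimately show ?thesis unfolding Sset_def by (intro CollectI exI[of _ "n div g"] exI[of _ "if T = {} then {} else {2::nat}"]) auto
qed

lemma spectra_eq: assumes "n > 0" shows "spectra (dihedral n) = Sset n"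
proof
  show "spectra (dihedral n) \<subseteq> Sset n" using spec_classify[OF assms] by (auto simp: spectra_def)
  show "Sset n \<subseteq> spectra (dihedral n)" using spec_exists[OF assms] by (auto simp: Sset_def)
qed




lemma noN5:
  fixes S :: "'a set set" and T :: "'a set"
  assumes inj: "\<And>x y. x \<in> S \<Longrightarrow> y \<in> S \<Longrightarrow> x \<inter> T = y \<inter> T \<Longrightarrow> x = y"
    and lub: "\<And>x y. x \<in> S \<Longrightarrow> y \<in> S \<Longrightarrow> \<exists>w\<in>S. x \<subseteq> w \<and> y \<subseteq> w \<and> w \<inter> T \<subseteq> x \<union> y"
    and glb: "\<And>x y. x \<in> S \<Longrightarrow> y \<in> S \<Longrightarrow> \<exists>w\<in>S. w \<subseteq> x \<and> w \<subseteq> y \<and> x \<inter> y \<inter> T \<subseteq> w"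
  shows "\<not> has_N5_sublattice S"
proof
  assume "has_N5_sublattice S"
  then obtain f where f: "inj f" "\<And>x. f x \<in> S"
    "\<And>x y. is_lub_in S (f x) (f y) (f (n5_sup x y)) \<and> is_glb_in S (f x) (f y) (f (n5_inf x y))"
    unfolding has_N5_sublattice_def by blast
  have L: "f N1 \<inter> T = (f x \<union> f y) \<inter> T" if lu: "is_lub_in S (f x) (f y) (f N1)" for x y
  proof -
    obtain w where w: "w \<in> S" "f x \<subseteq> w" "f y \<subseteq> w" "w \<inter> T \<subseteq> f x \<union> f y" using lub[OF f(2) f(2)] by blast
    have u: "f x \<subseteq> f N1" "f y \<subseteq> f N1" "\<And>w. w \<in> S \<Longrightarrow> f x \<subseteq> w \<Longrightarrow> f y \<subseteq> w \<Longrightarrow> f N1 \<subseteq> w"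
      using lu unfolding is_lub_in_def by auto
    have "f N1 \<subseteq> w" using u(3) w(1-3) .
    then show ?thesis using w(4) u(1,2) by auto
  qed
  have G: "f N0 \<inter> T = (f x \<inter> f y) \<inter> T" if gl: "is_glb_in S (f x) (f y) (f N0)" for x y
  proof -
    obtain w where w: "w \<in> S" "w \<subseteq> f x" "w \<subseteq> f y" "f x \<inter> f y \<inter> T \<subseteq> w" using glb[OF f(2) f(2)] by blast
    have u: "f N0 \<subseteq> f x" "f N0 \<subseteq> f y" "\<And>w. w \<in> S \<Longrightarrow> w \<subseteq> f x \<Longrightarrow> w \<subseteq> f y \<Longrightarrow> w \<subseteq> f N0"
      using gl unfolding is_glb_in_def by auto
    have "w \<subseteq> f N0" using u(3) w(1-3) .
    then show ?thesis using w(4) u(1,2) by auto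
  qed
  have "n5_sup Na Nc = N1" "n5_sup Nb Nc = N1" "n5_inf Na Nc = N0" "n5_inf Nb Nc = N0" "n5_sup Na Nb = Nb"
    by (simp_all add: n5_sup_def n5_inf_def)
  then have l1: "f N1 \<inter> T = (f Na \<union> f Nc) \<inter> T" and l2: "f N1 \<inter> T = (f Nb \<union> f Nc) \<inter> T"
    and g1: "f N0 \<inter> T = (f Na \<inter> f Nc) \<inter> T" and g2: "f N0 \<inter> T = (f Nb \<inter> f Nc) \<inter> T"
    and ab0: "is_lub_in S (f Na) (f Nb) (f Nb)"
    using L[of Na Nc] L[of Nb Nc] G[of Na Nc] G[of Nb Nc] f(3)[of Na Nc] f(3)[of Nb Nc] f(3)[of Na Nb] by auto
  have ab: "f Na \<subseteq> f Nb" using ab0 unfolding is_lub_in_def by auto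
  have "f Na \<inter> T = f Nb \<inter> T"
  proof
    show "f Na \<inter> T \<subseteq> f Nb \<inter> T" using ab by auto
    show "f Nb \<inter> T \<subseteq> f Na \<inter> T"
    proof
      fix v assume v: "v \<in> f Nb \<inter> T"
      then have "v \<in> (f Na \<union> f Nc) \<inter> T" using l1 l2 by auto
      then show "v \<in> f Na \<inter> T"
      proof (cases "v \<in> f Na")
        case False
        then have "v \<in> f Nc" using \<open>v \<in> (f Na \<union> f Nc) \<inter> T\<close> by auto
        then have "v \<in> f Nb \<inter> f Nc \<inter> T" using v by auto
        then show ?thesis using g1 g2 by auto
      qed (use v in auto)
    qed
  qed
  then have "f Na = f Nb" by (rule inj[OF f(2) f(2)])
  then have "Na = Nb" by (rule injD[OF f(1)])
  then show False by simp
qed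


lemma comp_pair: "x \<subseteq> y \<Longrightarrow> x \<in> S \<Longrightarrow> y \<in> S \<Longrightarrow>
  is_lub_in S x y y \<and> is_lub_in S y x y \<and> is_glb_in S x y x \<and> is_glb_in S y x x"
  unfolding is_lub_in_def is_glb_in_def by blast

lemma yesN5:
  fixes S :: "'a set set"
  assumes mem: "z \<in> S" "a \<in> S" "b \<in> S" "c \<in> S" "u \<in> S"
    and ord: "z \<subset> a" "a \<subset> b" "b \<subset> u" "z \<subset> c" "c \<subset> u"
    and meet: "a \<inter> c = z" "b \<inter> c = z"
    and join: "\<And>w. w \<in> S \<Longrightarrow> a \<subseteq> w \<Longrightarrow> c \<subseteq> w \<Longrightarrow> u \<subseteq> w"
  shows "has_N5_sublattice S"
proof -
  define f where "f = (\<lambda>x. case x of N0 \<Rightarrow> z | Na \<Rightarrow> a | Nb \<Rightarrow> b | Nc \<Rightarrow> c | N1 \<Rightarrow> u)"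
  have incl: "z \<subseteq> a" "z \<subseteq> b" "z \<subseteq> c" "z \<subseteq> u" "a \<subseteq> b" "a \<subseteq> u" "b \<subseteq> u" "c \<subseteq> u"
    using ord by (simp_all add: less_le_not_le) (meson order_trans less_imp_le ord)+
  have join2: "\<And>w. w \<in> S \<Longrightarrow> b \<subseteq> w \<Longrightarrow> c \<subseteq> w \<Longrightarrow> u \<subseteq> w"
  proof -
    fix w assume "w \<in> S" "b \<subseteq> w" "c \<subseteq> w"
    then show "u \<subseteq> w" using join[of w] incl(5) by (meson order_trans)
  qed
  have s1: "is_lub_in S a c u" "is_lub_in S c a u" "is_lub_in S b c u" "is_lub_in S c b u"
    unfolding is_lub_in_def using join join2 mem(5) incl(6-8) by blast+
  have s2: "is_glb_in S a c z" "is_glb_in S c a z" "is_glb_in S b c z" "is_glb_in S c b z"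
    unfolding is_glb_in_def using meet mem(1) by blast+
  note cp = comp_pair[OF incl(1) mem(1) mem(2)] comp_pair[OF incl(2) mem(1) mem(3)]
    comp_pair[OF incl(3) mem(1) mem(4)] comp_pair[OF incl(4) mem(1) mem(5)]
    comp_pair[OF incl(5) mem(2) mem(3)] comp_pair[OF incl(6) mem(2) mem(5)]
    comp_pair[OF incl(7) mem(3) mem(5)] comp_pair[OF incl(8) mem(4) mem(5)]
    comp_pair[OF order_refl mem(1) mem(1)] comp_pair[OF order_refl mem(2) mem(2)]
    comp_pair[OF order_refl mem(3) mem(3)] comp_pair[OF order_refl mem(4) mem(4)]
    comp_pair[OF order_refl mem(5) mem(5)]
  have ne: "z \<noteq> a" "z \<noteq> b" "z \<noteq> c" "z \<noteq> u" "a \<noteq> b" "a \<noteq> c" "a \<noteq> u" "b \<noteq> c" "b \<noteq> u" "c \<noteq> u"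
    using ord incl meet by blast+
  have "inj f"
  proof (rule injI)
    fix x y assume "f x = f y" then show "x = y" using ne
      by (cases x; cases y) (simp_all add: f_def)
  qed
  moreover have "\<forall>x. f x \<in> S" using mem by (auto simp: f_def split: n5.split)
  moreover have "is_lub_in S (f x) (f y) (f (n5_sup x y)) \<and> is_glb_in S (f x) (f y) (f (n5_inf x y))" for x y
    by (cases x; cases y) (simp_all only: f_def n5_sup_def n5_inf_def n5_le.simps if_True if_False n5.case s1 s2 cp simp_thms)
  ultimately show ?thesis unfolding has_N5_sublattice_def by blast
qed



definition PP :: "nat set" where "PP = {q. \<exists>r e. prime r \<and> 0 < e \<and> q = r ^ e}"

lemma Sset_intro: "m dvd n \<Longrightarrow> F \<subseteq> {2} \<Longrightarrow> Dv m \<union> F \<in> Sset n"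
  unfolding Sset_def by blast

lemma Sset_E: assumes "X \<in> Sset n"
  obtains m F where "m dvd n" "F \<subseteq> {2}" "X = Dv m \<union> F"
  using assms unfolding Sset_def by blast

lemma memdvd: "d \<in> Dv m \<union> F \<Longrightarrow> F \<subseteq> {2} \<Longrightarrow> d \<noteq> 2 \<Longrightarrow> d dvd m"
  unfolding Dv_def by auto

lemma pp_lcm: fixes a b r :: nat
  assumes "prime r" "r ^ e dvd lcm a b" "a \<noteq> 0" "b \<noteq> 0"
  shows "r ^ e dvd a \<or> r ^ e dvd b"
proof -
  have nu: "\<not> is_unit r" using assms(1) by (metis not_prime_unit)
  have l0: "lcm a b \<noteq> 0" using assms by simp
  have "e \<le> multiplicity r (lcm a b)" using assms(2) power_dvd_iff_le_multiplicity[OF l0 nu] by simp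
  also have "\<dots> = max (multiplicity r a) (multiplicity r b)" using assms by (simp add: multiplicity_lcm)
  finally show ?thesis using power_dvd_iff_le_multiplicity[OF assms(3) nu] power_dvd_iff_le_multiplicity[OF assms(4) nu]
    by (auto simp: max_def split: if_splits)
qed

lemma p_lcm: fixes a b r :: nat
  assumes "prime r" "r dvd lcm a b" "a \<noteq> 0" "b \<noteq> 0"
  shows "r dvd a \<or> r dvd b"
  using pp_lcm[of r 1 a b] assms by simp

lemma inj_gen:
  assumes n: "n > 0" and PPT: "PP \<subseteq> T"
    and hyp: "\<And>d. d dvd n \<Longrightarrow> even d \<Longrightarrow> d \<noteq> 2 \<Longrightarrow> \<exists>c\<in>T. c \<noteq> 2 \<and> even c \<and> c dvd d"
    and X: "X \<in> Sset n" and Y: "Y \<in> Sset n" and eq: "X \<inter> T = Y \<inter> T"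
  shows "X \<subseteq> Y"
proof
  obtain m1 F1 where m1: "m1 dvd n" "F1 \<subseteq> {2}" "X = Dv m1 \<union> F1" using X by (rule Sset_E)
  obtain m2 F2 where m2: "m2 dvd n" "F2 \<subseteq> {2}" "Y = Dv m2 \<union> F2" using Y by (rule Sset_E)
  have m10: "m1 \<noteq> 0" using m1 n by auto
  have m20: "m2 \<noteq> 0" using m2 n by auto
  have TY: "q \<in> T \<Longrightarrow> q \<in> X \<Longrightarrow> q \<in> Y" for q using eq by blast
  fix d assume d: "d \<in> X"
  show "d \<in> Y"
  proof (cases "d = 2")
    case True
    have "2 \<in> PP" unfolding PP_def by (intro CollectI exI[of _ 2] exI[of _ 1]) simp
    then show ?thesis using True d TY PPT by blast
  next
    case False
    then have dm1: "d dvd m1" using d m1 memdvd by blast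
    have d0: "d \<noteq> 0" using dm1 m10 by auto
    have "d dvd m2"
    proof (rule multiplicity_le_imp_dvd[OF d0])
      fix r :: nat assume r: "prime r"
      define e where "e = multiplicity r d"
      show "multiplicity r d \<le> multiplicity r m2"
      proof (cases "e = 0")
        case True then show ?thesis by (simp add: e_def)
      next
        case False
        have red: "r ^ e dvd d" by (simp add: e_def multiplicity_dvd)
        then have "r ^ e dvd m1" using dm1 by (rule dvd_trans)
        then have "r ^ e \<in> X" using m1 by (simp add: Dv_def)
        moreover have "r ^ e \<in> PP" unfolding PP_def using r False by blast
        ultimately have reY: "r ^ e \<in> Y" using TY PPT by blast
        have "r ^ e dvd m2"
        proof (cases "r ^ e = 2")
          case False then show ?thesis using reY m2 memdvd by blast
        next
          case True
          then have "even d" using red by simp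
          moreover have "d dvd n" using dm1 m1(1) by (rule dvd_trans)
          ultimately obtain c where c: "c \<in> T" "c \<noteq> 2" "even c" "c dvd d" using hyp \<open>d \<noteq> 2\<close> by blast
          then have "c \<in> X" using dm1 m1 by (auto simp: Dv_def intro: dvd_trans)
          then have "c \<in> Y" using TY c by blast
          then have "c dvd m2" using c m2 memdvd by blast
          then show ?thesis using True c by (metis dvd_trans)
        qed
        moreover have "\<not> is_unit r" using r by (metis not_prime_unit)
        ultimately show ?thesis using power_dvd_iff_le_multiplicity[OF m20] by (simp add: e_def[symmetric])
      qed
    qed
    then show ?thesis using m2 by (simp add: Dv_def)
  qed
qed

lemma glb_gen:
  assumes X: "X \<in> Sset n" and Y: "Y \<in> Sset n"
  shows "\<exists>w\<in>Sset n. w \<subseteq> X \<and> w \<subseteq> Y \<and> X \<inter> Y \<inter> T \<subseteq> w"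
proof -
  obtain m1 F1 where m1: "m1 dvd n" "F1 \<subseteq> {2}" "X = Dv m1 \<union> F1" using X by (rule Sset_E)
  obtain m2 F2 where m2: "m2 dvd n" "F2 \<subseteq> {2}" "Y = Dv m2 \<union> F2" using Y by (rule Sset_E)
  define w where "w = Dv (gcd m1 m2) \<union> ({2} \<inter> X \<inter> Y)"
  have "w \<in> Sset n" unfolding w_def using m1 by (intro Sset_intro) (auto intro: dvd_trans)
  moreover have "w \<subseteq> X" "w \<subseteq> Y" using m1 m2 by (auto simp: w_def Dv_def intro: dvd_trans)
  moreover have "X \<inter> Y \<inter> T \<subseteq> w"
  proof
    fix q assume q: "q \<in> X \<inter> Y \<inter> T"
    show "q \<in> w"
    proof (cases "q = 2")
      case False
      then have "q dvd m1" "q dvd m2" using q m1 m2 memdvd by blast+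
      then show ?thesis by (simp add: w_def Dv_def)
    qed (use q w_def in auto)
  qed
  ultimately show ?thesis by blast
qed

lemma lub_pp:
  assumes n: "n > 0" and X: "X = Dv m1 \<union> F1" and Y: "Y = Dv m2 \<union> F2"
    and m: "m1 dvd n" "m2 dvd n" and F: "F1 \<subseteq> {2}" "F2 \<subseteq> {2}"
  shows "Dv (lcm m1 m2) \<union> ({2} \<inter> (X \<union> Y)) \<in> Sset n"
    "X \<subseteq> Dv (lcm m1 m2) \<union> ({2} \<inter> (X \<union> Y))" "Y \<subseteq> Dv (lcm m1 m2) \<union> ({2} \<inter> (X \<union> Y))"
    "q \<in> PP \<Longrightarrow> q \<in> Dv (lcm m1 m2) \<Longrightarrow> q \<in> X \<union> Y"
proof -
  show "Dv (lcm m1 m2) \<union> ({2} \<inter> (X \<union> Y)) \<in> Sset n" using m by (intro Sset_intro) auto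
  show "X \<subseteq> Dv (lcm m1 m2) \<union> ({2} \<inter> (X \<union> Y))" "Y \<subseteq> Dv (lcm m1 m2) \<union> ({2} \<inter> (X \<union> Y))"
    using X Y F by (auto simp: Dv_def intro: dvd_trans)
  assume q: "q \<in> PP" "q \<in> Dv (lcm m1 m2)"
  then obtain r e where "prime r" "q = r ^ e" unfolding PP_def by blast
  moreover have "m1 \<noteq> 0" "m2 \<noteq> 0" using m n by auto
  ultimately have "q dvd m1 \<or> q dvd m2" using q pp_lcm by (auto simp: Dv_def)
  then show "q \<in> X \<union> Y" using X Y by (auto simp: Dv_def)
qed

lemma odd_case: assumes n: "n > 0" "odd n" shows "\<not> has_N5_sublattice (Sset n)"
proof (rule noN5[where T = PP])
  fix X Y assume XY: "X \<in> Sset n" "Y \<in> Sset n" "X \<inter> PP = Y \<inter> PP"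
  have hyp: "\<And>d. d dvd n \<Longrightarrow> even d \<Longrightarrow> d \<noteq> 2 \<Longrightarrow> \<exists>c\<in>PP. c \<noteq> 2 \<and> even c \<and> c dvd d"
    using n by (auto intro: dvd_trans)
  show "X = Y" using inj_gen[OF n(1) order_refl hyp] XY by blast
next
  fix X Y assume XY: "X \<in> Sset n" "Y \<in> Sset n"
  obtain m1 F1 where m1: "m1 dvd n" "F1 \<subseteq> {2}" "X = Dv m1 \<union> F1" using XY(1) by (rule Sset_E)
  obtain m2 F2 where m2: "m2 dvd n" "F2 \<subseteq> {2}" "Y = Dv m2 \<union> F2" using XY(2) by (rule Sset_E)
  note L = lub_pp[OF n(1) m1(3) m2(3) m1(1) m2(1) m1(2) m2(2)]
  show "\<exists>w\<in>Sset n. X \<subseteq> w \<and> Y \<subseteq> w \<and> w \<inter> PP \<subseteq> X \<union> Y"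
    using L by (intro bexI[OF _ L(1)]) blast
next
  fix X Y assume "X \<in> Sset n" "Y \<in> Sset n"
  then show "\<exists>w\<in>Sset n. w \<subseteq> X \<and> w \<subseteq> Y \<and> X \<inter> Y \<inter> PP \<subseteq> w" by (rule glb_gen)
qed



lemma even_div_2pt: fixes p d t :: nat
  assumes p: "prime p" "odd p" and d: "d dvd 2 * p ^ t" "even d" "d \<noteq> 2"
  shows "2 * p dvd d"
proof -
  obtain d' where d': "d = 2 * d'" using d(2) by blast
  then have "d' dvd p ^ t" using d(1) by simp
  then obtain j where j: "j \<le> t" "d' = p ^ j" using divides_primepow_nat[OF p(1)] by blast
  have "j \<noteq> 0" using j d' d(3) by auto
  then have "p dvd d'" using j by simp
  then show ?thesis using d' by simp
qed

lemma Dv2: "Dv 2 = {1, 2}"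
proof -
  have "d dvd (2::nat) \<longleftrightarrow> d = 1 \<or> d = 2" for d using two_is_prime_nat prime_nat_iff by auto
  then show ?thesis unfolding Dv_def by auto
qed

lemma case2: fixes p t n :: nat
  assumes p: "prime p" "odd p" and n: "n = 2 * p ^ t"
  shows "\<not> has_N5_sublattice (Sset n)"
proof (rule noN5[where T = "PP \<union> {2 * p}"])
  have n0: "n > 0" using n p by (simp add: prime_gt_0_nat)
  have p1: "p > 1" using prime_gt_1_nat[OF p(1)] by simp
  {
  fix X Y assume XY: "X \<in> Sset n" "Y \<in> Sset n" "X \<inter> (PP \<union> {2 * p}) = Y \<inter> (PP \<union> {2 * p})"
  have hyp: "\<And>d. d dvd n \<Longrightarrow> even d \<Longrightarrow> d \<noteq> 2 \<Longrightarrow> \<exists>c\<in>PP \<union> {2 * p}. c \<noteq> 2 \<and> even c \<and> c dvd d"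
  proof -
    fix d assume "d dvd n" "even d" "d \<noteq> 2"
    then have "2 * p dvd d" using even_div_2pt[OF p] n by blast
    then show "\<exists>c\<in>PP \<union> {2 * p}. c \<noteq> 2 \<and> even c \<and> c dvd d" using p1 by (intro bexI[of _ "2 * p"]) auto
  qed
  have sub: "PP \<subseteq> PP \<union> {2 * p}" by blast
  show "X = Y" using inj_gen[OF n0 sub hyp XY(1,2,3)] inj_gen[OF n0 sub hyp XY(2,1) XY(3)[symmetric]] by blast
  }
next
  have n0: "n > 0" using n p by (simp add: prime_gt_0_nat)
  have p1: "p > 1" using prime_gt_1_nat[OF p(1)] by simp
  fix X Y assume XY: "X \<in> Sset n" "Y \<in> Sset n"
  obtain m1 F1 where m1: "m1 dvd n" "F1 \<subseteq> {2}" "X = Dv m1 \<union> F1" using XY(1) by (rule Sset_E)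
  obtain m2 F2 where m2: "m2 dvd n" "F2 \<subseteq> {2}" "Y = Dv m2 \<union> F2" using XY(2) by (rule Sset_E)
  have m10: "m1 \<noteq> 0" "m2 \<noteq> 0" using m1 m2 n0 by auto
  note L = lub_pp[OF n0 m1(3) m2(3) m1(1) m2(1) m1(2) m2(2)]
  have special: "\<exists>w\<in>Sset n. A \<subseteq> w \<and> B \<subseteq> w \<and> w \<inter> (PP \<union> {2 * p}) \<subseteq> A \<union> B"
    if AB: "A = Dv 2 \<union> G1" "B = Dv b \<union> G2" "b dvd n" "odd b" "G1 \<subseteq> {2}" "G2 \<subseteq> {2}" for A B b G1 G2
  proof (intro bexI[of _ "Dv b \<union> {2}"] conjI)
    show "Dv b \<union> {2} \<in> Sset n" using AB by (intro Sset_intro) auto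
    have "A \<subseteq> {1, 2}" using AB(1,5) Dv2 by auto
    moreover have "1 \<in> Dv b" by (simp add: Dv_def)
    ultimately show "A \<subseteq> Dv b \<union> {2}" by auto
    show "B \<subseteq> Dv b \<union> {2}" using AB by auto
    show "(Dv b \<union> {2}) \<inter> (PP \<union> {2 * p}) \<subseteq> A \<union> B"
    proof
      fix q assume q: "q \<in> (Dv b \<union> {2}) \<inter> (PP \<union> {2 * p})"
      show "q \<in> A \<union> B"
      proof (cases "q = 2")
        case True then show ?thesis using AB by (simp add: Dv_def)
      next
        case False
        then have "q dvd b" using q by (auto simp: Dv_def)
        then show ?thesis using AB by (simp add: Dv_def)
      qed
    qed
  qed
  show "\<exists>w\<in>Sset n. X \<subseteq> w \<and> Y \<subseteq> w \<and> w \<inter> (PP \<union> {2 * p}) \<subseteq> X \<union> Y"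
  proof (cases "2 * p dvd lcm m1 m2 \<and> \<not> 2 * p dvd m1 \<and> \<not> 2 * p dvd m2")
    case False
    show ?thesis
    proof (intro bexI[OF _ L(1)] conjI)
      show "X \<subseteq> Dv (lcm m1 m2) \<union> ({2} \<inter> (X \<union> Y))" "Y \<subseteq> Dv (lcm m1 m2) \<union> ({2} \<inter> (X \<union> Y))"
        using L by auto
      show "(Dv (lcm m1 m2) \<union> ({2} \<inter> (X \<union> Y))) \<inter> (PP \<union> {2 * p}) \<subseteq> X \<union> Y"
      proof
        fix q assume q: "q \<in> (Dv (lcm m1 m2) \<union> ({2} \<inter> (X \<union> Y))) \<inter> (PP \<union> {2 * p})"
        show "q \<in> X \<union> Y"
        proof (cases "q \<in> PP")
          case True then show ?thesis using q L(4) by blast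
        next
          case nPP: False
          then have "q = 2 * p" using q by blast
          moreover have "2 \<in> PP" unfolding PP_def by (intro CollectI exI[of _ 2] exI[of _ 1]) simp
          ultimately have "2 * p dvd lcm m1 m2" using q nPP by (auto simp: Dv_def)
          then have "2 * p dvd m1 \<or> 2 * p dvd m2" using False by blast
          then show ?thesis using m1 m2 \<open>q = 2 * p\<close> by (auto simp: Dv_def)
        qed
      qed
    qed
  next
    case True
    have "2 dvd lcm m1 m2" using True by (meson dvd_mult_left)
    then have "2 dvd m1 \<or> 2 dvd m2" using p_lcm[of 2 m1 m2] m10 by simp
    moreover have "p dvd lcm m1 m2" using True by (meson dvd_mult_right)
    then have "p dvd m1 \<or> p dvd m2" using p_lcm[of p m1 m2] m10 p by simp
    moreover have "m1 = 2" if "even m1" using even_div_2pt[OF p, of m1 t] that m1 n True by blast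
    moreover have "m2 = 2" if "even m2" using even_div_2pt[OF p, of m2 t] that m2 n True by blast
    moreover have "\<not> p dvd 2"
    proof
      assume "p dvd 2"
      then have "p = 1 \<or> p = 2" using two_is_prime_nat prime_nat_iff by blast
      then show False using p1 p(2) by auto
    qed
    moreover have "2 * p dvd m" if "even m" "p dvd m" for m
      using that p(2) by (intro divides_mult) auto
    ultimately consider "m1 = 2" "odd m2" | "m2 = 2" "odd m1" using True by metis
    then show ?thesis
    proof cases
      case 1 then show ?thesis using special[OF _ m2(3) m2(1) _ m1(2) m2(2)] m1(3) by blast
    next
      case 2 then show ?thesis using special[OF _ m1(3) m1(1) _ m2(2) m1(2)] m2(3) by (metis Un_commute)
    qed
  qed
next
  fix X Y assume "X \<in> Sset n" "Y \<in> Sset n"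
  then show "\<exists>w\<in>Sset n. w \<subseteq> X \<and> w \<subseteq> Y \<and> X \<inter> Y \<inter> (PP \<union> {2 * p}) \<subseteq> w" by (rule glb_gen)
qed



lemma Dv_inter: "Dv a \<inter> Dv b = Dv (gcd a b)" by (auto simp: Dv_def)

lemma Dv_mono: "a dvd b \<Longrightarrow> Dv a \<subseteq> Dv b" by (auto simp: Dv_def intro: dvd_trans)

lemma Dv_mem: "x \<in> Dv a \<longleftrightarrow> x dvd a" by (simp add: Dv_def)

lemma Sset_intro0: "m dvd n \<Longrightarrow> Dv m \<in> Sset n"
  using Sset_intro[of m n "{}"] by simp

lemma pos_gen: fixes n p c0 :: nat
  assumes n: "n > 0" and p: "prime p" "odd p" and c0: "even c0" "c0 \<noteq> 2" "coprime p c0"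
    "gcd (2 * p) c0 = 2" "p * c0 dvd n"
  shows "has_N5_sublattice (Sset n)"
proof -
  have p1: "p > 1" using prime_gt_1_nat[OF p(1)] by simp
  have p2: "p \<noteq> 2" using p(2) by auto
  have c00: "c0 > 0" using c0 n by (auto intro: Nat.gr0I)
  have cn: "c0 dvd n" using c0(5) by (meson dvd_mult_right dvd_trans)
  have pn: "p dvd n" using c0(5) by (meson dvd_mult_left dvd_trans)
  have twop: "2 * p dvd p * c0" using c0(1) by (auto simp: mult.commute)
  have tn: "2 dvd n" using c0(1) cn by (meson dvd_trans)
  have c0not2: "\<not> c0 dvd 2"
  proof
    assume "c0 dvd 2"
    then have "c0 = 1 \<or> c0 = 2" using two_is_prime_nat prime_nat_iff by blast
    then show False using c0(1,2) by auto
  qed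
  have D2: "Dv 2 = {1, 2}" by (rule Dv2)
  show ?thesis
  proof (rule yesN5[where z = "Dv 2" and a = "Dv p \<union> {2}" and b = "Dv (2 * p)" and c = "Dv c0" and u = "Dv (p * c0)"])
    show "Dv 2 \<in> Sset n" using tn by (rule Sset_intro0)
    show "Dv p \<union> {2} \<in> Sset n" using pn by (rule Sset_intro) simp
    show "Dv (2 * p) \<in> Sset n" using twop c0(5) by (meson dvd_trans Sset_intro0)
    show "Dv c0 \<in> Sset n" using cn by (rule Sset_intro0)
    show "Dv (p * c0) \<in> Sset n" using c0(5) by (rule Sset_intro0)
    show "Dv 2 \<subset> Dv p \<union> {2}"
    proof -
      have "p \<in> Dv p" by (simp add: Dv_mem)
      moreover have "p \<notin> Dv 2" using D2 p1 p2 by auto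
      moreover have "Dv 2 \<subseteq> Dv p \<union> {2}" using D2 by (auto simp: Dv_mem)
      ultimately show ?thesis by blast
    qed
    show "Dv p \<union> {2} \<subset> Dv (2 * p)"
    proof -
      have "2 * p \<in> Dv (2 * p)" by (simp add: Dv_mem)
      moreover have "2 * p \<notin> Dv p \<union> {2}" using p1 by (auto simp: Dv_mem)
      moreover have "Dv p \<union> {2} \<subseteq> Dv (2 * p)" using Dv_mono[of p "2 * p"] by (auto simp: Dv_mem)
      ultimately show ?thesis by blast
    qed
    show "Dv (2 * p) \<subset> Dv (p * c0)"
    proof -
      have "p * c0 \<in> Dv (p * c0)" by (simp add: Dv_mem)
      moreover have "p * c0 \<notin> Dv (2 * p)" using c0not2 p1 by (auto simp: Dv_mem mult.commute)
      moreover have "Dv (2 * p) \<subseteq> Dv (p * c0)" using Dv_mono[OF twop] .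
      ultimately show ?thesis by blast
    qed
    show "Dv 2 \<subset> Dv c0"
    proof -
      have "c0 \<in> Dv c0" by (simp add: Dv_mem)
      moreover have "c0 \<notin> Dv 2" using c0not2 by (simp add: Dv_mem)
      moreover have "Dv 2 \<subseteq> Dv c0" using Dv_mono c0(1) by blast
      ultimately show ?thesis by blast
    qed
    show "Dv c0 \<subset> Dv (p * c0)"
    proof -
      have "p * c0 \<in> Dv (p * c0)" by (simp add: Dv_mem)
      moreover have "p * c0 \<notin> Dv c0" using c00 p1 by (auto simp: Dv_mem)
      moreover have "Dv c0 \<subseteq> Dv (p * c0)" using Dv_mono by simp
      ultimately show ?thesis by blast
    qed
    show "(Dv p \<union> {2}) \<inter> Dv c0 = Dv 2"
    proof -
      have "(Dv p \<union> {2}) \<inter> Dv c0 = (Dv p \<inter> Dv c0) \<union> ({2} \<inter> Dv c0)" by blast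
      also have "Dv p \<inter> Dv c0 = {1}"
      proof -
        have "gcd p c0 = 1" using c0(3) by (simp add: coprime_iff_gcd_eq_1)
        moreover have "Dv (1::nat) = {1}" by (auto simp: Dv_def)
        ultimately show ?thesis by (simp only: Dv_inter)
      qed
      also have "{2} \<inter> Dv c0 = {2}" using c0(1) by (auto simp: Dv_mem)
      finally show ?thesis using D2 by auto
    qed
    show "Dv (2 * p) \<inter> Dv c0 = Dv 2" using c0(4) by (simp add: Dv_inter)
    fix w assume w: "w \<in> Sset n" "Dv p \<union> {2} \<subseteq> w" "Dv c0 \<subseteq> w"
    obtain m F where m: "m dvd n" "F \<subseteq> {2}" "w = Dv m \<union> F" using w(1) by (rule Sset_E)
    have "p \<in> Dv p" "c0 \<in> Dv c0" by (simp_all add: Dv_mem)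
    have "p \<in> Dv m \<union> F" using w(2) m(3) \<open>p \<in> Dv p\<close> by blast
    then have "p dvd m" using m(2) p2 by (rule memdvd)
    moreover have "c0 \<in> Dv m \<union> F" using w(3) m(3) \<open>c0 \<in> Dv c0\<close> by blast
    then have "c0 dvd m" using m(2) c0(2) by (rule memdvd)
    ultimately have "p * c0 dvd m" using c0(3) by (metis divides_mult)
    then show "Dv (p * c0) \<subseteq> w" using m Dv_mono by blast
  qed
qed



theorem theorem2p9:
  fixes n \<alpha> k :: nat and p t :: "nat \<Rightarrow> nat"
  assumes "k \<ge> 1"
    and "\<forall>i\<in>{1..k}. prime (p i) \<and> odd (p i) \<and> t i \<ge> 1"
    and "inj_on p {1..k}"
    and "n = 2 ^ \<alpha> * (\<Prod>i=1..k. p i ^ t i)"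
  shows "has_N5_sublattice (spectra (dihedral n)) \<longleftrightarrow> (\<alpha> \<ge> 2 \<or> (\<alpha> = 1 \<and> k \<ge> 2))"
proof -
  note k = assms(1) and pr = assms(2) and pinj = assms(3)
  define P where "P = (\<Prod>i=1..k. p i ^ t i)"
  have nP: "n = 2 ^ \<alpha> * P" using assms(4) by (simp add: P_def)
  have P0: "P > 0" unfolding P_def using pr by (intro prod_pos) (auto simp: prime_gt_0_nat)
  have oddP: "odd P" unfolding P_def using pr by (subst even_prod_iff) auto
  have pdvd: "p i dvd P" if "i \<in> {1..k}" for i
  proof -
    have "t i \<ge> 1" using pr that by auto
    then have "p i dvd p i ^ t i" by (simp add: dvd_power)
    also have "\<dots> dvd P" unfolding P_def using that by (intro dvd_prodI) auto
    finally show ?thesis .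
  qed
  have n0: "n > 0" using nP P0 by simp
  have Seq: "spectra (dihedral n) = Sset n" using n0 by (rule spectra_eq)
  have one: "1 \<in> {1..k}" using k by simp
  have p1: "prime (p 1)" "odd (p 1)" using pr one by auto
  show ?thesis unfolding Seq
  proof
    assume h: "has_N5_sublattice (Sset n)"
    show "\<alpha> \<ge> 2 \<or> (\<alpha> = 1 \<and> k \<ge> 2)"
    proof (rule ccontr)
      assume "\<not> (\<alpha> \<ge> 2 \<or> (\<alpha> = 1 \<and> k \<ge> 2))"
      then consider "\<alpha> = 0" | "\<alpha> = 1" "k = 1" using k by linarith
      then show False
      proof cases
        case 1
        then have "n = P" using nP by simp
        then show False using odd_case[OF n0] oddP h by simp
      next
        case 2
        then have "n = 2 * p 1 ^ t 1" using nP by (simp add: P_def)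
        then show False using case2[OF p1] h by blast
      qed
    qed
  next
    assume "\<alpha> \<ge> 2 \<or> (\<alpha> = 1 \<and> k \<ge> 2)"
    then consider "\<alpha> \<ge> 2" | "\<alpha> = 1" "k \<ge> 2" by blast
    then show "has_N5_sublattice (Sset n)"
    proof cases
      case 1
      have cop: "coprime (p 1) 4"
      proof -
        have c2: "coprime (p 1) 2" using p1(2) by simp
        have "coprime (p 1) (2 ^ 2)" using c2 coprime_power_right_iff[of "p 1" 2 2] by blast
        moreover have "(2::nat) ^ 2 = 4" by simp
        ultimately show ?thesis by metis
      qed
      have g: "gcd (2 * p 1) 4 = 2"
      proof -
        have "gcd (2 * p 1) (2 * 2) = 2 * gcd (p 1) 2" by (simp add: gcd_mult_distrib_nat)
        moreover have "gcd (p 1) 2 = 1" using p1(2) by (simp add: coprime_iff_gcd_eq_1[symmetric])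
        ultimately show ?thesis by simp
      qed
      have "(4::nat) dvd 2 ^ \<alpha>"
      proof -
        have "(2::nat) ^ 2 dvd 2 ^ \<alpha>" using 1 by (rule le_imp_power_dvd)
        then show ?thesis by simp
      qed
      then have "p 1 * 4 dvd n" using pdvd[OF one] nP by (simp add: mult.commute mult_dvd_mono)
      then show ?thesis using pos_gen[OF n0 p1, of 4] cop g by simp
    next
      case 2
      have two: "2 \<in> {1..k}" using 2 by simp
      have q: "prime (p 2)" "odd (p 2)" using pr two by auto
      have pq: "p 1 \<noteq> p 2" using pinj one two by (metis inj_on_eq_iff numeral_eq_one_iff semiring_norm(85))
      have cpq: "coprime (p 1) (p 2)" using primes_coprime[OF p1(1) q(1) pq] .
      have cop: "coprime (p 1) (2 * p 2)" using cpq p1(2) by simp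
      have g: "gcd (2 * p 1) (2 * p 2) = 2"
      proof -
        have "gcd (2 * p 1) (2 * p 2) = 2 * gcd (p 1) (p 2)" by (simp add: gcd_mult_distrib_nat)
        then show ?thesis using cpq by (simp add: coprime_iff_gcd_eq_1)
      qed
      have q1: "p 2 > 1" using prime_gt_1_nat[OF q(1)] by simp
      have "p 1 * p 2 dvd P" using pdvd[OF one] pdvd[OF two] cpq by (metis divides_mult)
      then have "p 1 * (2 * p 2) dvd n" using nP 2 by (simp add: mult.left_commute)
      then show ?thesis using pos_gen[OF n0 p1, of "2 * p 2"] cop g q1 by simp
    qed
  qed
qed


end
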